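(* On $\overline{M_0}$ and on $\overline{M_{-1}}$ one has $\overline\delta\circ\overline{j^{aro}}=\overline{j^{aro}}\circ\overline\partial$.
   Context: Fix a finite set $C$ and a field of characteristic zero. Monomials $x^{\mathbf k}=\prod(x^a_j)^{k^a_j}$ in variables $x^a_j$ ($a\in C$, $j\ge-1$) have weight $\sum jk^a_j$, and $\mathbf k!=\prod k^a_j!$. $\overline{M_0}$ (resp. $\overline{M_{-1}}$) is a copy of the span of monomials of weight $\ge0$ (resp. $\ge-1$), the two copies being regarded as distinct. The transpose derivation is $\overline\partial x^{\mathbf k}=\sum_{j\ge0,a}k^a_jx^{\mathbf k-\mathbf e^a_j+\mathbf e^a_{j-1}}$ (acting within each copy). A tree (resp. aroma) is a finite connected directed graph with $C$-decorated vertices in which every vertex has exactly one outgoing edge except one root (resp. every vertex has exactly one outgoing edge). A tree or aroma with free edges assigns to each vertex $v$ a number $r_v\ge0$ of free edges; objects are up to isomorphism preserving decorations and the $r_v$; $\sigma(\tau)$ is the number of such automorphisms. $\overline\delta=\sum_v\overline\delta_v$ where $\overline\delta_v$ removes one free edge at $v$ (zero if $r_v=0$). With $f(v)$ the number of non-free edges ending at $v$, $\overline\Phi(\tau)=\prod_vx^{d(v)}_{f(v)+r_v-1}$. Define $\overline{j^{aro}}(x^{\kappa})=\sum_{a}\frac{\kappa!}{\sigma(a)}a$ for $x^\kappa\in\overline{M_0}$, summing over aromas with free edges with $\overline\Phi(a)=x^\kappa$, and $\overline{j^{aro}}(x^{\mathbf k})=\sum_t\frac{\mathbf k!}{\sigma(t)}t$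 for $x^{\mathbf k}\in\overline{M_{-1}}$, summing over trees with free edges with $\overline\Phi(t)=x^{\mathbf k}$ (empty sums are $0$), extended linearly. *)

theory Defs
  imports Main "HOL-Library.FuncSet"
begin

text \<open>A monomial x^k is represented by its exponent function k on pairs (a,j);
  it is a genuine monomial iff it has finite support and k(a,j) = 0 for j < -1.\<close>

type_synonym 'c expo = "'c \<times> int \<Rightarrow> nat"

definition is_monom :: "'c expo \<Rightarrow> bool" where
  "is_monom k \<longleftrightarrow> finite {v. k v \<noteq> 0} \<and> (\<forall>a j. j < -1 \<longrightarrow> k (a, j) = 0)"

definition weight :: "'c expo \<Rightarrow> int" where
  "weight k = (\<Sum>v\<in>{v. k v \<noteq> 0}. snd v * int (k v))"

definition mfact :: "'c expo \<Rightarrow> nat" where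
  "mfact k = (\<Prod>v\<in>{v. k v \<noteq> 0}. fact (k v))"

text \<open>Linear combinations (over a field 'k) of elements of type 'b are
  finitely supported functions 'b => 'k; linear extension of a map on basis elements:\<close>

definition lin_ext :: "('b \<Rightarrow> 'd \<Rightarrow> 'k::comm_ring_1) \<Rightarrow> ('b \<Rightarrow> 'k) \<Rightarrow> ('d \<Rightarrow> 'k)" where
  "lin_ext F L = (\<lambda>y. \<Sum>x\<in>{x. L x \<noteq> 0}. L x * F x y)"

definition fin_supp :: "('b \<Rightarrow> 'k::zero) \<Rightarrow> bool" where
  "fin_supp L \<longleftrightarrow> finite {x. L x \<noteq> 0}"

definition shift :: "'c expo \<Rightarrow> 'c \<Rightarrow> int \<Rightarrow> 'c expo" where
  "shift k a j = k((a, j) := k (a, j) - 1, (a, j - 1) := k (a, j - 1) + 1)"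

definition dbar_mono :: "'c expo \<Rightarrow> 'c expo \<Rightarrow> 'k::comm_ring_1" where
  "dbar_mono k k' = (\<Sum>p\<in>{(a, j). j \<ge> 0 \<and> k (a, j) > 0 \<and> k' = shift k a j}. of_nat (k p))"

definition dbar :: "('c expo \<Rightarrow> 'k::comm_ring_1) \<Rightarrow> ('c expo \<Rightarrow> 'k)" where
  "dbar = lin_ext dbar_mono"

text \<open>Concrete labelled graph on vertices {0..<nv g}: out v = Some w is the unique
  outgoing (non-free) edge v -> w, None if v has no outgoing edge; dec v is the
  decoration; fr v = r_v is the number of free edges at v.\<close>

datatype 'c fg = FG (nv: nat) (out: "nat \<Rightarrow> nat option") (dec: "nat \<Rightarrow> 'c") (fr: "nat \<Rightarrow> nat")

definition wf_fg :: "'c fg \<Rightarrow> bool" where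
  "wf_fg g \<longleftrightarrow> (\<forall>v<nv g. \<forall>w. out g v = Some w \<longrightarrow> w < nv g)"

definition adj :: "'c fg \<Rightarrow> (nat \<times> nat) set" where
  "adj g = {(v, w). v < nv g \<and> w < nv g \<and> (out g v = Some w \<or> out g w = Some v)}"

definition connected_fg :: "'c fg \<Rightarrow> bool" where
  "connected_fg g \<longleftrightarrow> nv g \<ge> 1 \<and> (\<forall>v<nv g. \<forall>w<nv g. (v, w) \<in> (adj g)\<^sup>*)"

definition is_tree :: "'c fg \<Rightarrow> bool" where
  "is_tree g \<longleftrightarrow> wf_fg g \<and> connected_fg g \<and> card {v. v < nv g \<and> out g v = None} = 1"

definition is_aroma :: "'c fg \<Rightarrow> bool" where
  "is_aroma g \<longleftrightarrow> wf_fg g \<and> connected_fg g \<and> (\<forall>v<nv g. out g v \<noteq> None)"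

definition preserves :: "'c fg \<Rightarrow> 'c fg \<Rightarrow> (nat \<Rightarrow> nat) \<Rightarrow> bool" where
  "preserves g h p \<longleftrightarrow> (\<forall>v<nv g. map_option p (out g v) = out h (p v)
      \<and> dec h (p v) = dec g v \<and> fr h (p v) = fr g v)"

definition iso_fg :: "'c fg \<Rightarrow> 'c fg \<Rightarrow> bool" where
  "iso_fg g h \<longleftrightarrow> nv g = nv h \<and> (\<exists>p. bij_betw p {0..<nv g} {0..<nv h} \<and> preserves g h p)"

text \<open>Isomorphism class of g (the objects of the paper are these classes).\<close>
definition cls :: "'c fg \<Rightarrow> 'c fg set" where
  "cls g = {h. wf_fg h \<and> iso_fg g h}"

definition rep :: "'c fg set \<Rightarrow> 'c fg" where
  "rep T = (SOME g. g \<in> T)"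

definition auts :: "'c fg \<Rightarrow> (nat \<Rightarrow> nat) set" where
  "auts g = {p \<in> {0..<nv g} \<rightarrow>\<^sub>E {0..<nv g}. bij_betw p {0..<nv g} {0..<nv g} \<and> preserves g g p}"

definition sigma :: "'c fg set \<Rightarrow> nat" where
  "sigma T = card (auts (rep T))"

text \<open>f(v): number of non-free edges ending at v.\<close>
definition indeg :: "'c fg \<Rightarrow> nat \<Rightarrow> nat" where
  "indeg g v = card {w. w < nv g \<and> out g w = Some v}"

text \<open>Phi(g) = prod_v x^{d(v)}_{f(v)+r_v-1}, as an exponent function.\<close>
definition Phi :: "'c fg \<Rightarrow> 'c expo" where
  "Phi g = (\<lambda>(a, j). card {v. v < nv g \<and> dec g v = a \<and> int (indeg g v + fr g v) - 1 = j})"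

definition is_aroma_class :: "'c fg set \<Rightarrow> bool" where
  "is_aroma_class T \<longleftrightarrow> (\<exists>g. is_aroma g \<and> T = cls g)"

definition is_tree_class :: "'c fg set \<Rightarrow> bool" where
  "is_tree_class T \<longleftrightarrow> (\<exists>g. is_tree g \<and> T = cls g)"

definition remove_free :: "'c fg \<Rightarrow> nat \<Rightarrow> 'c fg" where
  "remove_free g v = FG (nv g) (out g) (dec g) ((fr g)(v := fr g v - 1))"

definition delta_cls :: "'c fg set \<Rightarrow> 'c fg set \<Rightarrow> 'k::comm_ring_1" where
  "delta_cls T T' = of_nat (card {v. v < nv (rep T) \<and> fr (rep T) v > 0
                                    \<and> cls (remove_free (rep T) v) = T'})"

definition delta :: "('c fg set \<Rightarrow> 'k::comm_ring_1) \<Rightarrow> ('c fg set \<Rightarrow> 'k)" where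
  "delta = lin_ext delta_cls"

definition jaro0_mono :: "'c expo \<Rightarrow> 'c fg set \<Rightarrow> 'k::field" where
  "jaro0_mono k T = (if is_aroma_class T \<and> Phi (rep T) = k
                      then of_nat (mfact k) / of_nat (sigma T) else 0)"

definition jaro1_mono :: "'c expo \<Rightarrow> 'c fg set \<Rightarrow> 'k::field" where
  "jaro1_mono k T = (if is_tree_class T \<and> Phi (rep T) = k
                      then of_nat (mfact k) / of_nat (sigma T) else 0)"

definition jaro0 :: "('c expo \<Rightarrow> 'k::field) \<Rightarrow> ('c fg set \<Rightarrow> 'k)" where
  "jaro0 = lin_ext jaro0_mono"

definition jaro1 :: "('c expo \<Rightarrow> 'k::field) \<Rightarrow> ('c fg set \<Rightarrow> 'k)" where
  "jaro1 = lin_ext jaro1_mono"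

text \<open>Elements of M_0-bar / M_{-1}-bar: finite linear combinations of monomials
  of weight >= 0 / >= -1.\<close>
definition in_M :: "int \<Rightarrow> ('c expo \<Rightarrow> 'k::zero) \<Rightarrow> bool" where
  "in_M m L \<longleftrightarrow> fin_supp L \<and> (\<forall>k. L k \<noteq> 0 \<longrightarrow> is_monom k \<and> weight k \<ge> m)"

end

theory Submission
  imports Defs
begin


lemma preserves_restrict:
  assumes "wf_fg g"
  shows "preserves g h (restrict p {0..<nv g}) = preserves g h p"
proof -
  have "\<And>v. v < nv g \<Longrightarrow> map_option (restrict p {0..<nv g}) (out g v) = map_option p (out g v)"
  proof -
    fix v assume "v < nv g"
    then show "map_option (restrict p {0..<nv g}) (out g v) = map_option p (out g v)"
      using assms unfolding wf_fg_def by (cases "out g v") auto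
  qed
  then show ?thesis unfolding preserves_def by auto
qed

lemma preserves_comp:
  assumes "preserves x y p" "preserves y z q" "\<And>v. v < nv x \<Longrightarrow> p v < nv y"
  shows "preserves x z (q \<circ> p)"
  using assms unfolding preserves_def by (auto simp: option.map_comp[symmetric])

lemma preserves_inv:
  assumes "wf_fg x" "nv x = n" "nv y = n" "bij_betw p {0..<n} {0..<n}" "preserves x y p"
  shows "preserves y x (inv_into {0..<n} p)"
  unfolding preserves_def
proof (intro allI impI)
  fix w assume w: "w < nv y"
  define v where "v = inv_into {0..<n} p w"
  have wn: "w \<in> {0..<n}" using w assms(3) by simp
  have v: "v < n" "p v = w"
    using bij_betw_apply[OF bij_betw_inv_into[OF assms(4)] wn] unfolding v_def apply simp
    using wn assms(4) unfolding v_def bij_betw_def by (simp add: f_inv_into_f)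
  have inj: "inj_on p {0..<n}" using assms(4) by (simp add: bij_betw_def)
  have P: "map_option p (out x v) = out y w" "dec y w = dec x v" "fr y w = fr x v"
    using assms(5) v assms(2) unfolding preserves_def by auto
  have "map_option (inv_into {0..<n} p) (out y w) = out x v"
    using P(1)[symmetric] assms(1,2) v(1) inj unfolding wf_fg_def
    by (cases "out x v") auto
  then show "map_option (inv_into {0..<n} p) (out y w) = out x (inv_into {0..<n} p w) \<and>
     dec x (inv_into {0..<n} p w) = dec y w \<and> fr x (inv_into {0..<n} p w) = fr y w"
    using P v_def by simp
qed

lemma iso_refl: "iso_fg g g"
  unfolding iso_fg_def preserves_def
  by (rule conjI, simp, rule exI[of _ id]) (auto simp: option.map_id)

lemma iso_sym: assumes "wf_fg g" "iso_fg g h" shows "iso_fg h g"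
proof -
  obtain p where p: "bij_betw p {0..<nv g} {0..<nv h}" "preserves g h p" "nv g = nv h"
    using assms(2) unfolding iso_fg_def by auto
  show ?thesis unfolding iso_fg_def
    using p preserves_inv[OF assms(1) refl p(3)[symmetric], of p] bij_betw_inv_into[OF p(1)]
    by auto
qed

lemma iso_trans: assumes "iso_fg g h" "iso_fg h k" shows "iso_fg g k"
proof -
  obtain p where p: "bij_betw p {0..<nv g} {0..<nv h}" "preserves g h p" "nv g = nv h"
    using assms(1) unfolding iso_fg_def by auto
  obtain q where q: "bij_betw q {0..<nv h} {0..<nv k}" "preserves h k q" "nv h = nv k"
    using assms(2) unfolding iso_fg_def by auto
  have "preserves g k (q \<circ> p)"
    by (rule preserves_comp[OF p(2) q(2)]) (use p(1) in \<open>auto simp: bij_betw_def\<close>)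
  then show ?thesis unfolding iso_fg_def using p q bij_betw_trans[OF p(1) q(1)] by auto
qed

lemma cls_eq_iff: assumes "wf_fg g" "wf_fg h" shows "cls g = cls h \<longleftrightarrow> iso_fg g h"
proof
  assume "cls g = cls h"
  then have "h \<in> cls g" using assms(2) iso_refl unfolding cls_def by auto
  then show "iso_fg g h" unfolding cls_def by auto
next
  assume "iso_fg g h"
  then show "cls g = cls h" unfolding cls_def
    using iso_sym[OF assms(1)] iso_trans by blast
qed

lemma rep_cls: assumes "wf_fg g" shows "rep (cls g) \<in> cls g"
proof -
  have "g \<in> cls g" using assms iso_refl unfolding cls_def by auto
  then show ?thesis unfolding rep_def by (rule someI)
qed

lemma rep_cls_wf: "wf_fg g \<Longrightarrow> wf_fg (rep (cls g))"
  using rep_cls unfolding cls_def by auto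

lemma rep_cls_iso: "wf_fg g \<Longrightarrow> iso_fg g (rep (cls g))"
  using rep_cls unfolding cls_def by auto

lemma cls_rep_cls: "wf_fg g \<Longrightarrow> cls (rep (cls g)) = cls g"
  using cls_eq_iff rep_cls_wf rep_cls_iso iso_sym by metis



definition isos :: "'c fg \<Rightarrow> 'c fg \<Rightarrow> (nat \<Rightarrow> nat) set" where
  "isos x y = {p \<in> {0..<nv x} \<rightarrow>\<^sub>E {0..<nv x}. bij_betw p {0..<nv x} {0..<nv y} \<and> preserves x y p}"

lemma auts_isos: "auts g = isos g g"
  unfolding auts_def isos_def by simp

lemma finite_isos: "finite (isos x y)"
proof -
  have "isos x y \<subseteq> {0..<nv x} \<rightarrow>\<^sub>E {0..<nv x}" unfolding isos_def by auto
  moreover have "finite ({0..<nv x} \<rightarrow>\<^sub>E {0..<nv x})" by (rule finite_PiE) auto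
  ultimately show ?thesis by (rule finite_subset)
qed

lemma inj_right_comp:
  assumes "bij_betw r {0..<n} {0..<n}"
  shows "inj_on (\<lambda>q. restrict (q \<circ> r) {0..<n}) ({0..<n} \<rightarrow>\<^sub>E {0..<n})"
proof (rule inj_onI)
  fix q q' assume q: "q \<in> {0..<n} \<rightarrow>\<^sub>E {0..<n}" "q' \<in> {0..<n} \<rightarrow>\<^sub>E {0..<n}"
    and e: "restrict (q \<circ> r) {0..<n} = restrict (q' \<circ> r) {0..<n}"
  show "q = q'"
  proof (rule extensionalityI[of _ "{0..<n}"])
    show "q \<in> extensional {0..<n}" "q' \<in> extensional {0..<n}" using q by (auto simp: PiE_def)
    fix w assume w: "w \<in> {0..<n}"
    have "w \<in> r ` {0..<n}" using assms w by (simp add: bij_betw_def)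
    then obtain v where v: "v \<in> {0..<n}" "w = r v" by auto
    have "restrict (q \<circ> r) {0..<n} v = restrict (q' \<circ> r) {0..<n} v" using e by simp
    then show "q w = q' w" using v by simp
  qed
qed

lemma inj_left_comp:
  assumes "inj_on r {0..<n}"
  shows "inj_on (\<lambda>q. restrict (r \<circ> q) {0..<n}) ({0..<n} \<rightarrow>\<^sub>E {0..<n})"
proof (rule inj_onI)
  fix q q' assume q: "q \<in> {0..<n} \<rightarrow>\<^sub>E {0..<n}" "q' \<in> {0..<n} \<rightarrow>\<^sub>E {0..<n}"
    and e: "restrict (r \<circ> q) {0..<n} = restrict (r \<circ> q') {0..<n}"
  show "q = q'"
  proof (rule extensionalityI[of _ "{0..<n}"])
    show "q \<in> extensional {0..<n}" "q' \<in> extensional {0..<n}" using q by (auto simp: PiE_def)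
    fix w assume w: "w \<in> {0..<n}"
    have "restrict (r \<circ> q) {0..<n} w = restrict (r \<circ> q') {0..<n} w" using e by simp
    then have "r (q w) = r (q' w)" using w by simp
    moreover have "q w \<in> {0..<n}" "q' w \<in> {0..<n}" using q w by auto
    ultimately show "q w = q' w" using assms by (auto dest: inj_onD)
  qed
qed

lemma isos_mem:
  "p \<in> isos x y \<longleftrightarrow> p \<in> {0..<nv x} \<rightarrow>\<^sub>E {0..<nv x} \<and> bij_betw p {0..<nv x} {0..<nv y} \<and> preserves x y p"
  unfolding isos_def by simp

lemma card_isos_right:
  assumes wx: "wf_fg x" and wy: "wf_fg y" and n: "nv x = n" "nv y = n" and p0: "p0 \<in> isos x y"
  shows "card (isos x y) = card (auts y)"
proof -
  have b0: "bij_betw p0 {0..<n} {0..<n}" and pr0: "preserves x y p0"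
    using p0 n unfolding isos_def by auto
  define pi where "pi = inv_into {0..<n} p0"
  have bi: "bij_betw pi {0..<n} {0..<n}" using bij_betw_inv_into[OF b0] pi_def by simp
  have pri: "preserves y x pi" using preserves_inv[OF wx n b0 pr0] pi_def by simp
  have in0: "\<And>v. v < n \<Longrightarrow> p0 v < n" using b0 by (auto simp: bij_betw_def)
  have ini: "\<And>v. v < n \<Longrightarrow> pi v < n" using bi by (auto simp: bij_betw_def)
  let ?f = "\<lambda>q. restrict (q \<circ> p0) {0..<n}"
  let ?g = "\<lambda>p. restrict (p \<circ> pi) {0..<n}"
  show ?thesis
  proof (rule card_bij_eq[of ?g _ _ ?f])
    show "inj_on ?g (isos x y)"
      by (rule inj_on_subset[OF inj_right_comp[OF bi]]) (auto simp: isos_def n)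
    show "inj_on ?f (auts y)"
      by (rule inj_on_subset[OF inj_right_comp[OF b0]]) (auto simp: auts_isos isos_def n)
    show "finite (isos x y)" "finite (auts y)" by (simp_all add: finite_isos auts_isos)
    show "?g ` isos x y \<subseteq> auts y"
    proof
      fix q assume "q \<in> ?g ` isos x y"
      then obtain p where p: "p \<in> isos x y" "q = ?g p" by auto
      have bp: "bij_betw p {0..<n} {0..<n}" "preserves x y p" using p n by (auto simp: isos_def)
      have "preserves y y (p \<circ> pi)" by (rule preserves_comp[OF pri bp(2)]) (simp add: ini n)
      then have "preserves y y q" using p(2) preserves_restrict[OF wy] n by simp
      moreover have "bij_betw q {0..<n} {0..<n}" using p(2) bij_betw_trans[OF bi bp(1)] by simp
      moreover have "q \<in> {0..<n} \<rightarrow>\<^sub>E {0..<n}" using p(2) bp(1) ini by (auto simp: bij_betw_def)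
      ultimately show "q \<in> auts y" by (simp add: auts_isos isos_def n)
    qed
    show "?f ` auts y \<subseteq> isos x y"
    proof
      fix p assume "p \<in> ?f ` auts y"
      then obtain q where q: "q \<in> auts y" "p = ?f q" by auto
      have bq: "bij_betw q {0..<n} {0..<n}" "preserves y y q" using q n by (auto simp: auts_isos isos_def)
      have "preserves x y (q \<circ> p0)" by (rule preserves_comp[OF pr0 bq(2)]) (simp add: in0 n)
      then have "preserves x y p" using q(2) preserves_restrict[OF wx] n by simp
      moreover have "bij_betw p {0..<n} {0..<n}" using q(2) bij_betw_trans[OF b0 bq(1)] by simp
      moreover have "p \<in> {0..<n} \<rightarrow>\<^sub>E {0..<n}" using q(2) bq(1) in0 by (auto simp: bij_betw_def)
      ultimately show "p \<in> isos x y" by (simp add: isos_def n)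
    qed
  qed
qed

lemma card_isos_left:
  assumes wx: "wf_fg x" and wy: "wf_fg y" and n: "nv x = n" "nv y = n" and p0: "p0 \<in> isos x y"
  shows "card (isos x y) = card (auts x)"
proof -
  have b0: "bij_betw p0 {0..<n} {0..<n}" and pr0: "preserves x y p0"
    using p0 n unfolding isos_def by auto
  define pi where "pi = inv_into {0..<n} p0"
  have bi: "bij_betw pi {0..<n} {0..<n}" using bij_betw_inv_into[OF b0] pi_def by simp
  have pri: "preserves y x pi" using preserves_inv[OF wx n b0 pr0] pi_def by simp
  have ini: "\<And>v. v < n \<Longrightarrow> pi v < n" using bi by (auto simp: bij_betw_def)
  have in0: "\<And>v. v < n \<Longrightarrow> p0 v < n" using b0 by (auto simp: bij_betw_def)
  let ?f = "\<lambda>q. restrict (p0 \<circ> q) {0..<n}"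
  let ?g = "\<lambda>p. restrict (pi \<circ> p) {0..<n}"
  show ?thesis
  proof (rule card_bij_eq[of ?g _ _ ?f])
    show "inj_on ?g (isos x y)"
      by (rule inj_on_subset[OF inj_left_comp]) (use bi in \<open>auto simp: isos_def n bij_betw_def\<close>)
    show "inj_on ?f (auts x)"
      by (rule inj_on_subset[OF inj_left_comp]) (use b0 in \<open>auto simp: auts_isos isos_def n bij_betw_def\<close>)
    show "finite (isos x y)" "finite (auts x)" by (simp_all add: finite_isos auts_isos)
    show "?g ` isos x y \<subseteq> auts x"
    proof
      fix q assume "q \<in> ?g ` isos x y"
      then obtain p where p: "p \<in> isos x y" "q = ?g p" by auto
      have bp: "bij_betw p {0..<n} {0..<n}" "preserves x y p" using p n by (auto simp: isos_def)
      have inp: "\<And>v. v < n \<Longrightarrow> p v < n" using bp by (auto simp: bij_betw_def)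
      have "preserves x x (pi \<circ> p)" by (rule preserves_comp[OF bp(2) pri]) (simp add: inp n)
      then have "preserves x x q" using p(2) preserves_restrict[OF wx] n by simp
      moreover have "bij_betw q {0..<n} {0..<n}" using p(2) bij_betw_trans[OF bp(1) bi] by simp
      moreover have "q \<in> {0..<n} \<rightarrow>\<^sub>E {0..<n}" using p(2) inp ini by auto
      ultimately show "q \<in> auts x" by (simp add: auts_isos isos_def n)
    qed
    show "?f ` auts x \<subseteq> isos x y"
    proof
      fix p assume "p \<in> ?f ` auts x"
      then obtain q where q: "q \<in> auts x" "p = ?f q" by auto
      have bq: "bij_betw q {0..<n} {0..<n}" "preserves x x q" using q n by (auto simp: auts_isos isos_def)
      have inq: "\<And>v. v < n \<Longrightarrow> q v < n" using bq by (auto simp: bij_betw_def)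
      have "preserves x y (p0 \<circ> q)" by (rule preserves_comp[OF bq(2) pr0]) (simp add: inq n)
      then have "preserves x y p" using q(2) preserves_restrict[OF wx] n by simp
      moreover have "bij_betw p {0..<n} {0..<n}" using q(2) bij_betw_trans[OF bq(1) b0] by simp
      moreover have "p \<in> {0..<n} \<rightarrow>\<^sub>E {0..<n}" using q(2) inq in0 by auto
      ultimately show "p \<in> isos x y" by (simp add: isos_def n)
    qed
  qed
qed

lemma iso_isos: assumes "wf_fg x" shows "iso_fg x y \<longleftrightarrow> nv x = nv y \<and> isos x y \<noteq> {}"
proof
  assume "iso_fg x y"
  then obtain p where p: "nv x = nv y" "bij_betw p {0..<nv x} {0..<nv y}" "preserves x y p"
    unfolding iso_fg_def by auto
  have "restrict p {0..<nv x} \<in> isos x y"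
    using p preserves_restrict[OF assms] unfolding isos_def by (auto simp: bij_betw_def)
  then show "nv x = nv y \<and> isos x y \<noteq> {}" using p by auto
next
  assume "nv x = nv y \<and> isos x y \<noteq> {}"
  then show "iso_fg x y" unfolding iso_fg_def isos_def by auto
qed

lemma card_auts_pos: assumes "wf_fg g" shows "card (auts g) > 0"
proof -
  have "preserves g g id" unfolding preserves_def by (simp add: option.map_id)
  then have "preserves g g (restrict id {0..<nv g})" using preserves_restrict[OF assms] by simp
  then have "restrict id {0..<nv g} \<in> auts g"
    unfolding auts_def by (auto simp: bij_betw_def)
  then show ?thesis using finite_isos[of g g] by (auto simp: auts_isos card_gt_0_iff)
qed



definition add_free :: "'c fg \<Rightarrow> nat \<Rightarrow> 'c fg" where
  "add_free g v = FG (nv g) (out g) (dec g) ((fr g)(v := fr g v + 1))"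

lemma add_free_simps[simp]: "nv (add_free g v) = nv g" "out (add_free g v) = out g"
  "dec (add_free g v) = dec g" "fr (add_free g v) = (fr g)(v := fr g v + 1)"
  by (simp_all add: add_free_def)

lemma remove_free_simps[simp]: "nv (remove_free g v) = nv g" "out (remove_free g v) = out g"
  "dec (remove_free g v) = dec g" "fr (remove_free g v) = (fr g)(v := fr g v - 1)"
  by (simp_all add: remove_free_def)

lemma wf_add_free[simp]: "wf_fg (add_free g v) = wf_fg g" by (simp add: wf_fg_def)
lemma wf_remove_free[simp]: "wf_fg (remove_free g v) = wf_fg g" by (simp add: wf_fg_def)

lemma pres_shift:
  assumes inj: "inj_on p {0..<n}" and n: "nv g = n" and u: "u < n"
  shows "(fr g u > 0 \<and> preserves (remove_free g u) g' p) \<longleftrightarrow> preserves g (add_free g' (p u)) p"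
proof -
  have key: "\<And>w. w < n \<Longrightarrow> p w = p u \<longleftrightarrow> w = u" using inj u by (auto dest: inj_onD)
  have A: "(fr g u > 0 \<and> (\<forall>w<n. fr g' (p w) = ((fr g)(u := fr g u - 1)) w)) \<longleftrightarrow>
        (\<forall>w<n. ((fr g')(p u := fr g' (p u) + 1)) (p w) = fr g w)"
  proof
    assume h: "0 < fr g u \<and> (\<forall>w<n. fr g' (p w) = ((fr g)(u := fr g u - 1)) w)"
    show "\<forall>w<n. ((fr g')(p u := fr g' (p u) + 1)) (p w) = fr g w"
    proof (intro allI impI)
      fix w assume w: "w < n"
      have e: "fr g' (p w) = ((fr g)(u := fr g u - 1)) w" using h w by blast
      show "((fr g')(p u := fr g' (p u) + 1)) (p w) = fr g w"
      proof (cases "w = u")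
        case True then show ?thesis using h e by simp
      next
        case False
        then have "p w \<noteq> p u" using key[OF w] by simp
        then show ?thesis using e False by simp
      qed
    qed
  next
    assume h: "\<forall>w<n. ((fr g')(p u := fr g' (p u) + 1)) (p w) = fr g w"
    have "((fr g')(p u := fr g' (p u) + 1)) (p u) = fr g u" using h u by blast
    then have hu: "fr g u = fr g' (p u) + 1" by simp
    show "0 < fr g u \<and> (\<forall>w<n. fr g' (p w) = ((fr g)(u := fr g u - 1)) w)"
    proof (intro conjI allI impI)
      show "0 < fr g u" using hu by simp
      fix w assume w: "w < n"
      have e: "((fr g')(p u := fr g' (p u) + 1)) (p w) = fr g w" using h w by blast
      show "fr g' (p w) = ((fr g)(u := fr g u - 1)) w"
      proof (cases "w = u")
        case True then show ?thesis using hu by simp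
      next
        case False
        then have "p w \<noteq> p u" using key[OF w] by simp
        then show ?thesis using e False by simp
      qed
    qed
  qed
  have P1: "preserves (remove_free g u) g' p \<longleftrightarrow>
     (\<forall>w<n. map_option p (out g w) = out g' (p w) \<and> dec g' (p w) = dec g w) \<and>
     (\<forall>w<n. fr g' (p w) = ((fr g)(u := fr g u - 1)) w)"
    unfolding preserves_def remove_free_simps n by blast
  have P2: "preserves g (add_free g' (p u)) p \<longleftrightarrow>
     (\<forall>w<n. map_option p (out g w) = out g' (p w) \<and> dec g' (p w) = dec g w) \<and>
     (\<forall>w<n. ((fr g')(p u := fr g' (p u) + 1)) (p w) = fr g w)"
    unfolding preserves_def add_free_simps n by blast
  show ?thesis using A P1 P2 by blast
qed

lemma sum_if_const: "finite A \<Longrightarrow> (\<Sum>u\<in>A. if P u then (c::nat) else 0) = card {u\<in>A. P u} * c"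
  by (simp add: sum.inter_filter[symmetric])

lemma count_id:
  assumes wg: "wf_fg g" and wg': "wf_fg g'" and n: "nv g = n" "nv g' = n"
  shows "card {u. u < n \<and> fr g u > 0 \<and> iso_fg (remove_free g u) g'} * card (auts g')
       = card {v. v < n \<and> iso_fg g (add_free g' v)} * card (auts g)"
proof -
  define Q where "Q = Sigma {0..<n} (\<lambda>u. if fr g u > 0 then isos (remove_free g u) g' else {})"
  define Q' where "Q' = Sigma {0..<n} (\<lambda>v. isos g (add_free g' v))"
  have cQ: "card Q = card {u. u < n \<and> fr g u > 0 \<and> iso_fg (remove_free g u) g'} * card (auts g')"
  proof -
    have "card Q = (\<Sum>u\<in>{0..<n}. card (if fr g u > 0 then isos (remove_free g u) g' else {}))"
      unfolding Q_def by (rule card_SigmaI) (auto simp: finite_isos)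
    also have "\<dots> = (\<Sum>u\<in>{0..<n}. if fr g u > 0 \<and> iso_fg (remove_free g u) g' then card (auts g') else 0)"
    proof (rule sum.cong[OF refl])
      fix u assume u: "u \<in> {0..<n}"
      show "card (if fr g u > 0 then isos (remove_free g u) g' else {}) =
          (if fr g u > 0 \<and> iso_fg (remove_free g u) g' then card (auts g') else 0)"
      proof (cases "fr g u > 0 \<and> iso_fg (remove_free g u) g'")
        case True
        then obtain p0 where "p0 \<in> isos (remove_free g u) g'" using iso_isos[of "remove_free g u" g'] wg by auto
        then show ?thesis using True card_isos_right[of "remove_free g u" g' n p0] wg wg' n by simp
      next
        case False
        then show ?thesis using iso_isos[of "remove_free g u" g'] wg n by auto
      qed
    qed
    also have "\<dots> = card {u\<in>{0..<n}. fr g u > 0 \<and> iso_fg (remove_free g u) g'} * card (auts g')"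
      by (rule sum_if_const) simp
    finally show ?thesis by (simp add: atLeast0LessThan)
  qed
  have cQ': "card Q' = card {v. v < n \<and> iso_fg g (add_free g' v)} * card (auts g)"
  proof -
    have "card Q' = (\<Sum>v\<in>{0..<n}. card (isos g (add_free g' v)))"
      unfolding Q'_def by (rule card_SigmaI) (auto simp: finite_isos)
    also have "\<dots> = (\<Sum>v\<in>{0..<n}. if iso_fg g (add_free g' v) then card (auts g) else 0)"
    proof (rule sum.cong[OF refl])
      fix v assume v: "v \<in> {0..<n}"
      show "card (isos g (add_free g' v)) = (if iso_fg g (add_free g' v) then card (auts g) else 0)"
      proof (cases "iso_fg g (add_free g' v)")
        case True
        then obtain p0 where "p0 \<in> isos g (add_free g' v)" using iso_isos[of g "add_free g' v"] wg by auto
        then show ?thesis using True card_isos_left[of g "add_free g' v" n p0] wg wg' n by simp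
      next
        case False
        then show ?thesis using iso_isos[of g "add_free g' v"] wg n by auto
      qed
    qed
    also have "\<dots> = card {v\<in>{0..<n}. iso_fg g (add_free g' v)} * card (auts g)"
      by (rule sum_if_const) simp
    finally show ?thesis by (simp add: atLeast0LessThan)
  qed
  have "card Q = card Q'"
  proof (rule card_bij_eq[of "\<lambda>(u, p). (p u, p)" _ _ "\<lambda>(v, p). (inv_into {0..<n} p v, p)"])
    show "finite Q" "finite Q'" unfolding Q_def Q'_def by (auto simp: finite_isos)
    show "inj_on (\<lambda>(u, p). (p u, p)) Q"
    proof (rule inj_onI)
      fix x y assume a: "x \<in> Q" "y \<in> Q" "(\<lambda>(u, p). (p u, p)) x = (\<lambda>(u, p). (p u, p)) y"
      obtain u p where x: "x = (u, p)" by (cases x)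
      obtain u' p' where y: "y = (u', p')" by (cases y)
      have pp: "p' = p" "p u = p u'" using a(3) x y by auto
      have "inj_on p {0..<n}" "u < n" "u' < n" using a(1,2) x y pp unfolding Q_def isos_def bij_betw_def
        using n by (auto split: if_splits)
      then show "x = y" using x y pp by (auto dest: inj_onD)
    qed
    show "inj_on (\<lambda>(v, p). (inv_into {0..<n} p v, p)) Q'"
    proof (rule inj_onI)
      fix x y assume a: "x \<in> Q'" "y \<in> Q'"
        "(\<lambda>(v, p). (inv_into {0..<n} p v, p)) x = (\<lambda>(v, p). (inv_into {0..<n} p v, p)) y"
      obtain v p where x: "x = (v, p)" by (cases x)
      obtain v' p' where y: "y = (v', p')" by (cases y)
      have pp: "p' = p" "inv_into {0..<n} p v = inv_into {0..<n} p v'" using a(3) x y by auto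
      have "bij_betw p {0..<n} {0..<n}" "v \<in> {0..<n}" "v' \<in> {0..<n}"
        using a(1,2) x y pp unfolding Q'_def isos_def using n by auto
      then have "v = v'" using pp(2) by (metis bij_betw_def inv_into_injective)
      then show "x = y" using x y pp by simp
    qed
    show "(\<lambda>(u, p). (p u, p)) ` Q \<subseteq> Q'"
    proof clarify
      fix u p assume "(u, p) \<in> Q"
      then have u: "u < n" "fr g u > 0" "p \<in> {0..<n} \<rightarrow>\<^sub>E {0..<n}" "bij_betw p {0..<n} {0..<n}"
        "preserves (remove_free g u) g' p"
        unfolding Q_def isos_def using n by (auto split: if_splits)
      have "preserves g (add_free g' (p u)) p"
        using pres_shift[of p n g u g'] u n by (simp add: bij_betw_def)
      then show "(p u, p) \<in> Q'" unfolding Q'_def isos_def using u n by (auto simp: bij_betw_def)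
    qed
    show "(\<lambda>(v, p). (inv_into {0..<n} p v, p)) ` Q' \<subseteq> Q"
    proof clarify
      fix v p assume "(v, p) \<in> Q'"
      then have v: "v < n" "p \<in> {0..<n} \<rightarrow>\<^sub>E {0..<n}" "bij_betw p {0..<n} {0..<n}"
        "preserves g (add_free g' v) p"
        unfolding Q'_def isos_def using n by auto
      define u where "u = inv_into {0..<n} p v"
      have vi: "v \<in> {0..<n}" using v(1) by simp
      have "u \<in> {0..<n}" using bij_betw_apply[OF bij_betw_inv_into[OF v(3)] vi] u_def by simp
      moreover have "p u = v" using vi v(3) unfolding u_def bij_betw_def by (simp add: f_inv_into_f)
      ultimately have u: "u < n" "p u = v" by auto
      have "fr g u > 0 \<and> preserves (remove_free g u) g' p"
        using pres_shift[of p n g u g'] u v n by (simp add: bij_betw_def)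
      then show "(inv_into {0..<n} p v, p) \<in> Q" unfolding Q_def isos_def using u v n u_def
        by auto
    qed
  qed
  then show ?thesis using cQ cQ' by simp
qed



lemma card_bij_pred:
  fixes n :: nat and p :: "nat \<Rightarrow> nat"
  assumes "bij_betw p {0..<n} {0..<n}" "\<And>v. v < n \<Longrightarrow> P' (p v) = P v"
  shows "card {v'. v' < n \<and> P' v'} = card {v. v < n \<and> P v}"
proof -
  have "{v'. v' < n \<and> P' v'} = p ` {v. v < n \<and> P v}"
  proof
    have "\<And>x. x < n \<Longrightarrow> p x < n"
    proof -
      fix x assume "x < n" then have "x \<in> {0..<n}" by simp
      from bij_betw_apply[OF assms(1) this] show "p x < n" by simp
    qed
    then show "p ` {v. v < n \<and> P v} \<subseteq> {v'. v' < n \<and> P' v'}"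
      using assms(2) by auto
    show "{v'. v' < n \<and> P' v'} \<subseteq> p ` {v. v < n \<and> P v}"
    proof
      fix w assume w: "w \<in> {v'. v' < n \<and> P' v'}"
      then have "w \<in> p ` {0..<n}" using assms(1) by (simp add: bij_betw_def)
      then obtain v where "v < n" "w = p v" by auto
      then show "w \<in> p ` {v. v < n \<and> P v}" using w assms(2) by auto
    qed
  qed
  moreover have "inj_on p {v. v < n \<and> P v}"
    using assms(1) by (rule inj_on_subset[OF bij_betw_imp_inj_on]) auto
  ultimately show ?thesis by (simp add: card_image)
qed

lemma Phi_iso: assumes wf: "wf_fg g" and iso: "iso_fg g h" shows "Phi g = Phi h"
proof -
  obtain p where p: "nv g = nv h" "bij_betw p {0..<nv g} {0..<nv h}" "preserves g h p"
    using iso unfolding iso_fg_def by auto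
  define n where "n = nv g"
  have b: "bij_betw p {0..<n} {0..<n}" using p n_def by simp
  have inj: "inj_on p {0..<n}" using b by (simp add: bij_betw_def)
  have pr: "\<And>v. v < n \<Longrightarrow> map_option p (out g v) = out h (p v) \<and> dec h (p v) = dec g v \<and> fr h (p v) = fr g v"
    using p(3) unfolding preserves_def n_def by auto
  have ind: "indeg h (p v) = indeg g v" if v: "v < n" for v
  proof -
    have "indeg h (p v) = card {w. w < n \<and> out h w = Some (p v)}" unfolding indeg_def using p n_def by simp
    also have "\<dots> = card {w. w < n \<and> out g w = Some v}"
    proof (rule card_bij_pred[OF b])
      fix w assume w: "w < n"
      show "(out h (p w) = Some (p v)) = (out g w = Some v)"
      proof
        assume "out g w = Some v" then show "out h (p w) = Some (p v)" using pr[OF w] by simp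
      next
        assume a: "out h (p w) = Some (p v)"
        then obtain z where z: "out g w = Some z" "p z = p v" using pr[OF w]
          by (cases "out g w") auto
        have "z < n" using z(1) wf w unfolding wf_fg_def n_def by auto
        then show "out g w = Some v" using z inj v by (auto dest: inj_onD)
      qed
    qed
    finally show ?thesis unfolding indeg_def n_def by simp
  qed
  show ?thesis
  proof (rule ext, clarify)
    fix a j
    have "Phi h (a, j) = card {v'. v' < n \<and> dec h v' = a \<and> int (indeg h v' + fr h v') - 1 = j}"
      unfolding Phi_def using p n_def by simp
    also have "\<dots> = card {v. v < n \<and> dec g v = a \<and> int (indeg g v + fr g v) - 1 = j}"
      by (rule card_bij_pred[OF b]) (use pr ind in auto)
    finally show "Phi g (a, j) = Phi h (a, j)" unfolding Phi_def n_def by simp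
  qed
qed

lemma indeg_add_free[simp]: "indeg (add_free g v) = indeg g"
  unfolding indeg_def by simp

lemma shift_at1: "shift k a j (a, j) = k (a, j) - 1" by (simp add: shift_def)
lemma shift_at2: "shift k a j (a, j - 1) = k (a, j - 1) + 1" by (simp add: shift_def)
lemma shift_at3: "(b, i) \<noteq> (a, j) \<Longrightarrow> (b, i) \<noteq> (a, j - 1) \<Longrightarrow> shift k a j (b, i) = k (b, i)"
  by (auto simp: shift_def fun_upd_def)

lemma Phi_add:
  assumes v: "v < nv g"
  shows "shift (Phi (add_free g v)) (dec g v) (int (indeg g v + fr g v)) = Phi g \<and>
         Phi (add_free g v) (dec g v, int (indeg g v + fr g v)) > 0"
proof -
  define n where "n = nv g"
  define tv where "tv w = int (indeg g w + fr g w) - 1" for w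
  define a where "a = dec g v"
  define j where "j = tv v + 1"
  have jj: "int (indeg g v + fr g v) = j" unfolding j_def tv_def by simp
  have eqw: "int (indeg g w + ((fr g)(v := fr g v + 1)) w) - 1 = (if w = v then j else tv w)" for w
    by (simp add: tv_def j_def)
  have PA: "Phi (add_free g v) (b, i) = card {w. w < n \<and> dec g w = b \<and> (if w = v then j else tv w) = i}" for b i
    unfolding Phi_def n_def using eqw by simp
  have PG: "Phi g (b, i) = card {w. w < n \<and> dec g w = b \<and> tv w = i}" for b i
    unfolding Phi_def n_def tv_def by simp
  have vn: "v < n" using v n_def by simp
  have fin: "finite {w. w < n \<and> Q w}" for Q by simp
  have pos: "Phi (add_free g v) (a, j) > 0"
  proof -
    have vin: "v \<in> {w. w < n \<and> dec g w = a \<and> (if w = v then j else tv w) = j}" using vn a_def by simp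
    then show ?thesis unfolding PA by (auto simp: card_gt_0_iff)
  qed
  have S: "shift (Phi (add_free g v)) a j (b, i) = Phi g (b, i)" for b i
  proof -
    have tvj: "tv v = j - 1" using j_def by simp
    consider "b = a \<and> i = j" | "b = a \<and> i = j - 1" | "(b, i) \<noteq> (a, j)" "(b, i) \<noteq> (a, j - 1)" by blast
    then show ?thesis
    proof cases
      case 1
      have e: "{w. w < n \<and> dec g w = b \<and> (if w = v then j else tv w) = i} =
            insert v {w. w < n \<and> dec g w = b \<and> tv w = i}"
      proof (rule set_eqI)
        fix w show "w \<in> {w. w < n \<and> dec g w = b \<and> (if w = v then j else tv w) = i} \<longleftrightarrow>
            w \<in> insert v {w. w < n \<and> dec g w = b \<and> tv w = i}"
          by (cases "w = v") (simp_all add: 1 vn a_def[symmetric])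
      qed
      have nv: "v \<notin> {w. w < n \<and> dec g w = b \<and> tv w = i}" using 1 tvj by simp
      have "Phi (add_free g v) (b, i) = Phi g (b, i) + 1"
        unfolding PA PG e using nv by simp
      then show ?thesis using 1 by (simp add: shift_at1)
    next
      case 2
      have e: "{w. w < n \<and> dec g w = b \<and> tv w = i} =
            insert v {w. w < n \<and> dec g w = b \<and> (if w = v then j else tv w) = i}"
      proof (rule set_eqI)
        fix w show "w \<in> {w. w < n \<and> dec g w = b \<and> tv w = i} \<longleftrightarrow>
            w \<in> insert v {w. w < n \<and> dec g w = b \<and> (if w = v then j else tv w) = i}"
          by (cases "w = v") (simp_all add: 2 vn a_def[symmetric] tvj)
      qed
      have nv: "v \<notin> {w. w < n \<and> dec g w = b \<and> (if w = v then j else tv w) = i}" using 2 by simp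
      have "Phi g (b, i) = Phi (add_free g v) (b, i) + 1"
        unfolding PA PG e using nv by simp
      then show ?thesis using 2 by (simp add: shift_at2)
    next
      case 3
      have e: "{w. w < n \<and> dec g w = b \<and> (if w = v then j else tv w) = i} =
            {w. w < n \<and> dec g w = b \<and> tv w = i}"
      proof (rule set_eqI)
        fix w show "w \<in> {w. w < n \<and> dec g w = b \<and> (if w = v then j else tv w) = i} \<longleftrightarrow>
            w \<in> {w. w < n \<and> dec g w = b \<and> tv w = i}"
        proof (cases "w = v")
          case True
          have "\<not> (dec g v = b \<and> j = i)" "\<not> (dec g v = b \<and> tv v = i)"
            using 3 a_def tvj by auto
          then show ?thesis using True by auto
        qed simp
      qed
      have "Phi (add_free g v) (b, i) = Phi g (b, i)" unfolding PA PG e ..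
      then show ?thesis using 3 by (simp add: shift_at3)
    qed
  qed
  have E: "shift (Phi (add_free g v)) a j = Phi g"
  proof (rule ext)
    fix x show "shift (Phi (add_free g v)) a j x = Phi g x" using S by (cases x) simp
  qed
  from E pos show ?thesis unfolding a_def jj by blast
qed



lemma shift_other: "x \<noteq> (a, j) \<Longrightarrow> x \<noteq> (a, j - 1) \<Longrightarrow> shift k a j x = k x"
  by (cases x) (simp add: shift_at3)

lemma shift_inj:
  assumes "k (a, j) > 0" "k' (a, j) > 0" "shift k a j = shift k' a j"
  shows "k = k'"
proof (rule ext)
  fix x
  consider "x = (a, j)" | "x = (a, j - 1)" | "x \<noteq> (a, j)" "x \<noteq> (a, j - 1)" by blast
  then show "k x = k' x"
  proof cases
    case 1
    have "shift k a j (a, j) = shift k' a j (a, j)" using assms(3) by simp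
    then show ?thesis using 1 assms(1,2) by (simp add: shift_at1)
  next
    case 2
    have "shift k a j (a, j - 1) = shift k' a j (a, j - 1)" using assms(3) by simp
    then show ?thesis using 2 by (simp add: shift_at2)
  next
    case 3
    have "shift k a j x = shift k' a j x" using assms(3) by simp
    then show ?thesis using 3 by (simp add: shift_other)
  qed
qed

lemma shift_uniq:
  assumes "k (b, i) > 0" "shift k a j = shift k b i"
  shows "(a, j) = (b, i)"
proof (rule ccontr)
  assume ne: "(a, j) \<noteq> (b, i)"
  have l: "shift k a j (a, j - 1) = k (a, j - 1) + 1" by (rule shift_at2)
  consider "(a, j - 1) = (b, i)" | "(a, j - 1) = (b, i - 1)" | "(a, j - 1) \<noteq> (b, i)" "(a, j - 1) \<noteq> (b, i - 1)" by blast
  then show False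
  proof cases
    case 1
    have "shift k b i (b, i) = k (b, i) - 1" by (rule shift_at1)
    then show False using l assms 1 by simp
  next
    case 2 then show False using ne by simp
  next
    case 3
    have "shift k b i (a, j - 1) = k (a, j - 1)" using 3 by (rule shift_other)
    then show False using l assms by simp
  qed
qed

lemma mfact_eq:
  assumes "finite W" "{x. k x \<noteq> 0} \<subseteq> W"
  shows "mfact k = (\<Prod>x\<in>W. fact (k x))"
  unfolding mfact_def by (rule prod.mono_neutral_left[OF assms(1,2)]) auto

lemma mfact_shift:
  assumes fin: "finite {x. k x \<noteq> 0}" and pos: "k (a, j) > 0"
  shows "mfact k * shift k a j (a, j - 1) = k (a, j) * mfact (shift k a j)"
proof -
  define K where "K = shift k a j"
  define W where "W = insert (a, j - 1) {x. k x \<noteq> 0}"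
  have fW: "finite W" using fin W_def by simp
  have sk: "{x. k x \<noteq> 0} \<subseteq> W" using W_def by auto
  have sK: "{x. K x \<noteq> 0} \<subseteq> W"
  proof
    fix x assume x: "x \<in> {x. K x \<noteq> 0}"
    consider "x = (a, j)" | "x = (a, j - 1)" | "x \<noteq> (a, j)" "x \<noteq> (a, j - 1)" by blast
    then show "x \<in> W"
    proof cases
      case 1 then show ?thesis using pos W_def by auto
    next
      case 2 then show ?thesis using W_def by auto
    next
      case 3 then show ?thesis using x W_def K_def by (auto simp: shift_other)
    qed
  qed
  have ne: "(a, j) \<noteq> (a, j - 1)" by simp
  have inW: "(a, j) \<in> W" "(a, j - 1) \<in> W" using pos W_def by auto
  define R where "R = W - {(a, j)} - {(a, j - 1)}"
  have split: "(\<Prod>x\<in>W. f x) = f (a, j) * (f (a, j - 1) * (\<Prod>x\<in>R. f x))" for f :: "'a \<times> int \<Rightarrow> nat"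
  proof -
    have "(\<Prod>x\<in>W. f x) = f (a, j) * (\<Prod>x\<in>W - {(a, j)}. f x)"
      using prod.remove[OF fW inW(1)] by simp
    moreover have "(\<Prod>x\<in>W - {(a, j)}. f x) = f (a, j - 1) * (\<Prod>x\<in>R. f x)"
      using prod.remove[of "W - {(a, j)}" "(a, j - 1)" f] fW inW ne R_def by simp
    ultimately show ?thesis by simp
  qed
  have restq: "(\<Prod>x\<in>R. fact (K x)) = (\<Prod>x\<in>R. fact (k x) :: nat)"
    by (rule prod.cong[OF refl]) (auto simp: R_def K_def shift_other)
  obtain m where m: "k (a, j) = Suc m" using pos by (cases "k (a, j)") auto
  have Ka: "K (a, j) = m" "K (a, j - 1) = k (a, j - 1) + 1"
    using m by (simp_all add: K_def shift_at1 shift_at2)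
  have "mfact k * K (a, j - 1) = fact (Suc m) * (fact (k (a, j - 1)) * (\<Prod>x\<in>R. fact (k x))) * (k (a, j - 1) + 1)"
    unfolding mfact_eq[OF fW sk] split m Ka by simp
  also have "\<dots> = Suc m * (fact m * (fact (k (a, j - 1) + 1) * (\<Prod>x\<in>R. fact (k x))))"
    by (simp add: algebra_simps)
  also have "\<dots> = k (a, j) * mfact K"
    unfolding mfact_eq[OF fW sK] split Ka restq m by simp
  finally show ?thesis unfolding K_def .
qed



lemma count_k:
  assumes fin: "finite {x. k x \<noteq> 0}"
  shows "of_nat (mfact k) * of_nat (card {v. v < nv g \<and> Phi (add_free g v) = k})
       = (dbar_mono k (Phi g) :: 'k::comm_ring_1) * of_nat (mfact (Phi g))"
proof -
  define K where "K = Phi g"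
  define n where "n = nv g"
  define D where "D = {(a, j). j \<ge> 0 \<and> k (a, j) > 0 \<and> K = shift k a j}"
  have dm: "dbar_mono k K = (\<Sum>p\<in>D. of_nat (k p) :: 'k)" unfolding dbar_mono_def D_def ..
  have char: "Phi (add_free g v) = k \<longleftrightarrow> (dec g v, int (indeg g v + fr g v)) \<in> D" if v: "v < n" for v
  proof -
    have P: "shift (Phi (add_free g v)) (dec g v) (int (indeg g v + fr g v)) = K"
      "Phi (add_free g v) (dec g v, int (indeg g v + fr g v)) > 0"
      using Phi_add[of v g] v n_def K_def by auto
    show ?thesis
    proof
      assume "Phi (add_free g v) = k" then show "(dec g v, int (indeg g v + fr g v)) \<in> D"
        using P D_def by auto
    next
      assume "(dec g v, int (indeg g v + fr g v)) \<in> D"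
      then have "k (dec g v, int (indeg g v + fr g v)) > 0"
        "shift k (dec g v) (int (indeg g v + fr g v)) = K" unfolding D_def by auto
      then show "Phi (add_free g v) = k" using shift_inj P by metis
    qed
  qed
  show ?thesis
  proof (cases "D = {}")
    case True
    have "{v. v < n \<and> Phi (add_free g v) = k} = {}"
    proof (rule set_eqI)
      fix v show "v \<in> {v. v < n \<and> Phi (add_free g v) = k} \<longleftrightarrow> v \<in> {}"
        using char[of v] True by (cases "v < n") simp_all
    qed
    then have c0: "card {v. v < nv g \<and> Phi (add_free g v) = k} = 0" using n_def by simp
    have d0: "dbar_mono k (Phi g) = (0::'k)" using dm True K_def by simp
    show ?thesis unfolding c0 d0 by simp
  next
    case False
    then obtain a j where aj: "(a, j) \<in> D" by auto
    have aj': "j \<ge> 0" "k (a, j) > 0" "K = shift k a j" using aj D_def by auto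
    have Dsing: "D = {(a, j)}"
    proof
      show "D \<subseteq> {(a, j)}"
      proof
        fix x assume x: "x \<in> D"
        obtain b i where bi: "x = (b, i)" by (cases x)
        have "k (b, i) > 0" "K = shift k b i" using x bi D_def by auto
        then have "(a, j) = (b, i)" using shift_uniq aj'(3) by metis
        then show "x \<in> {(a, j)}" using bi by simp
      qed
    qed (use aj in simp)
    have "{v. v < n \<and> Phi (add_free g v) = k} = {v. v < n \<and> dec g v = a \<and> int (indeg g v + fr g v) - 1 = j - 1}"
    proof (rule set_eqI)
      fix v show "v \<in> {v. v < n \<and> Phi (add_free g v) = k} \<longleftrightarrow>
          v \<in> {v. v < n \<and> dec g v = a \<and> int (indeg g v + fr g v) - 1 = j - 1}"
        using char[of v] Dsing by (cases "v < n") simp_all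
    qed
    then have cV: "card {v. v < n \<and> Phi (add_free g v) = k} = K (a, j - 1)"
      unfolding K_def Phi_def n_def by simp
    have "mfact k * K (a, j - 1) = k (a, j) * mfact K"
      using mfact_shift[OF fin aj'(2)] aj'(3) by simp
    then have "(of_nat (mfact k * K (a, j - 1)) :: 'k) = of_nat (k (a, j) * mfact K)" by simp
    then show ?thesis using cV dm Dsing K_def n_def by (simp add: of_nat_mult)
  qed
qed



lemma preserves_add_remove:
  assumes "preserves g h p" "inj_on p {0..<nv g}" "v < nv g"
  shows "preserves (add_free g v) (add_free h (p v)) p"
    "preserves (remove_free g v) (remove_free h (p v)) p"
proof -
  have key: "\<And>w. w < nv g \<Longrightarrow> p w = p v \<longleftrightarrow> w = v" using assms(2,3) by (auto dest: inj_onD)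
  have pr: "\<And>w. w < nv g \<Longrightarrow> map_option p (out g w) = out h (p w) \<and> dec h (p w) = dec g w \<and> fr h (p w) = fr g w"
    using assms(1) unfolding preserves_def by blast
  show "preserves (add_free g v) (add_free h (p v)) p"
    unfolding preserves_def add_free_simps
  proof (intro allI impI conjI)
    fix w assume w: "w < nv g"
    show "map_option p (out g w) = out h (p w)" "dec h (p w) = dec g w" using pr[OF w] by auto
    show "((fr h)(p v := fr h (p v) + 1)) (p w) = ((fr g)(v := fr g v + 1)) w"
      using pr[OF w] pr[OF assms(3)] key[OF w] by (cases "w = v") auto
  qed
  show "preserves (remove_free g v) (remove_free h (p v)) p"
    unfolding preserves_def remove_free_simps
  proof (intro allI impI conjI)
    fix w assume w: "w < nv g"
    show "map_option p (out g w) = out h (p w)" "dec h (p w) = dec g w" using pr[OF w] by auto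
    show "((fr h)(p v := fr h (p v) - 1)) (p w) = ((fr g)(v := fr g v - 1)) w"
      using pr[OF w] pr[OF assms(3)] key[OF w] by (cases "w = v") auto
  qed
qed

lemma iso_add_remove:
  assumes "iso_fg g h" "v < nv g"
  shows "\<exists>w < nv h. iso_fg (add_free g v) (add_free h w) \<and> iso_fg (remove_free g v) (remove_free h w)"
proof -
  obtain p where p: "nv g = nv h" "bij_betw p {0..<nv g} {0..<nv h}" "preserves g h p"
    using assms(1) unfolding iso_fg_def by auto
  have "p v < nv h" using bij_betw_apply[OF p(2)] assms(2) by simp
  moreover have "iso_fg (add_free g v) (add_free h (p v))" "iso_fg (remove_free g v) (remove_free h (p v))"
    using preserves_add_remove[OF p(3) _ assms(2)] p(1,2) unfolding iso_fg_def
    by (auto simp: bij_betw_def)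
  ultimately show ?thesis by blast
qed

locale Bpred =
  fixes B :: "'c fg \<Rightarrow> bool"
  assumes B_wf: "B g \<Longrightarrow> wf_fg g"
    and B_add: "B (add_free g v) = B g"
    and B_remove: "B (remove_free g v) = B g"
begin

definition Pc :: "'c fg set \<Rightarrow> bool" where "Pc T \<longleftrightarrow> (\<exists>g. B g \<and> T = cls g)"

lemma Pc_rep: assumes "Pc T" shows "wf_fg (rep T)" "cls (rep T) = T" "rep T \<in> T"
proof -
  obtain g where g: "B g" "T = cls g" using assms unfolding Pc_def by auto
  have w: "wf_fg g" using B_wf g(1) .
  show "wf_fg (rep T)" "cls (rep T) = T" "rep T \<in> T"
    using rep_cls_wf[OF w] cls_rep_cls[OF w] rep_cls[OF w] g(2) by simp_all
qed

lemma Pc_remove: assumes "Pc T" "u < nv (rep T)" shows "Pc (cls (remove_free (rep T) u))"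
proof -
  obtain g0 where g0: "B g0" "T = cls g0" using assms(1) unfolding Pc_def by auto
  have w0: "wf_fg g0" using B_wf g0 by simp
  have "iso_fg g0 (rep T)" using rep_cls_iso[OF w0] g0 by simp
  then have "iso_fg (rep T) g0" using iso_sym[OF w0] by blast
  then obtain w where "iso_fg (remove_free (rep T) u) (remove_free g0 w)"
    using iso_add_remove assms(2) by blast
  then have "cls (remove_free (rep T) u) = cls (remove_free g0 w)"
    using cls_eq_iff[of "remove_free (rep T) u" "remove_free g0 w"] Pc_rep(1)[OF assms(1)] w0 by simp
  then show ?thesis unfolding Pc_def using B_remove g0 by blast
qed

lemma Pc_add: assumes "Pc T" "u < nv (rep T)" shows "Pc (cls (add_free (rep T) u))"
proof -
  obtain g0 where g0: "B g0" "T = cls g0" using assms(1) unfolding Pc_def by auto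
  have w0: "wf_fg g0" using B_wf g0 by simp
  have "iso_fg g0 (rep T)" using rep_cls_iso[OF w0] g0 by simp
  then have "iso_fg (rep T) g0" using iso_sym[OF w0] by blast
  then obtain w where "iso_fg (add_free (rep T) u) (add_free g0 w)"
    using iso_add_remove assms(2) by blast
  then have "cls (add_free (rep T) u) = cls (add_free g0 w)"
    using cls_eq_iff[of "add_free (rep T) u" "add_free g0 w"] Pc_rep(1)[OF assms(1)] w0 by simp
  then show ?thesis unfolding Pc_def using B_add g0 by blast
qed

end



definition normg :: "'c fg \<Rightarrow> 'c fg" where
  "normg g = FG (nv g) (restrict (out g) {0..<nv g}) (restrict (dec g) {0..<nv g}) (restrict (fr g) {0..<nv g})"

lemma cls_normg: "cls (normg g) = cls g"
proof -
  have "preserves (normg g) h p = preserves g h p" for h p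
    unfolding preserves_def normg_def by auto
  then have "iso_fg (normg g) h = iso_fg g h" for h
    unfolding iso_fg_def by (simp add: normg_def)
  then show ?thesis unfolding cls_def by simp
qed

lemma Phi_bounds:
  assumes fin: "finite {x. k x \<noteq> 0}" and ph: "Phi g = k"
  shows "nv g \<le> (\<Sum>x\<in>{x. k x \<noteq> 0}. k x)"
    "\<And>v. v < nv g \<Longrightarrow> fr g v \<le> (\<Sum>x\<in>{x. k x \<noteq> 0}. nat (snd x + 1))"
proof -
  define tv where "tv v = int (indeg g v + fr g v) - 1" for v
  define A where "A x = {w. w < nv g \<and> dec g w = fst x \<and> tv w = snd x}" for x :: "'a \<times> int"
  have kA: "k x = card (A x)" for x
    unfolding A_def tv_def ph[symmetric] Phi_def by (cases x) simp
  have key: "(dec g v, tv v) \<in> {x. k x \<noteq> 0}" if v: "v < nv g" for v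
  proof -
    have "v \<in> A (dec g v, tv v)" using v A_def by simp
    moreover have "finite (A (dec g v, tv v))" unfolding A_def by simp
    ultimately have "card (A (dec g v, tv v)) \<noteq> 0" by auto
    then show ?thesis using kA by simp
  qed
  have "{0..<nv g} \<subseteq> (\<Union>x\<in>{x. k x \<noteq> 0}. A x)"
  proof
    fix v assume "v \<in> {0..<nv g}"
    then have v: "v < nv g" by simp
    then have "v \<in> A (dec g v, tv v)" using A_def by simp
    then show "v \<in> (\<Union>x\<in>{x. k x \<noteq> 0}. A x)" using key[OF v] by blast
  qed
  then have "nv g \<le> card (\<Union>x\<in>{x. k x \<noteq> 0}. A x)"
    using card_mono[of "\<Union>x\<in>{x. k x \<noteq> 0}. A x" "{0..<nv g}"] fin unfolding A_def by simp
  also have "\<dots> \<le> (\<Sum>x\<in>{x. k x \<noteq> 0}. card (A x))" by (rule card_UN_le[OF fin])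
  also have "\<dots> = (\<Sum>x\<in>{x. k x \<noteq> 0}. k x)" using kA by simp
  finally show "nv g \<le> (\<Sum>x\<in>{x. k x \<noteq> 0}. k x)" .
  fix v assume v: "v < nv g"
  have "fr g v \<le> nat (snd (dec g v, tv v) + 1)" unfolding tv_def by simp
  also have "\<dots> \<le> (\<Sum>x\<in>{x. k x \<noteq> 0}. nat (snd x + 1))"
    by (rule member_le_sum[OF key[OF v]]) (use fin in auto)
  finally show "fr g v \<le> (\<Sum>x\<in>{x. k x \<noteq> 0}. nat (snd x + 1))" .
qed

lemma finite_cls_Phi:
  fixes k :: "('c::finite) expo"
  assumes fin: "finite {x. k x \<noteq> 0}"
  shows "finite {T. \<exists>g. wf_fg g \<and> Phi g = k \<and> T = cls g}"
proof -
  define N where "N = (\<Sum>x\<in>{x. k x \<noteq> 0}. k x)"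
  define M where "M = (\<Sum>x\<in>{x. k x \<noteq> 0}. nat (snd x + 1))"
  define F where "F = (\<Union>m\<in>{..N}. (\<lambda>(oo, dd, ff). FG m oo dd ff) `
     (({0..<m} \<rightarrow>\<^sub>E insert None (Some ` {0..<m})) \<times> (({0..<m} \<rightarrow>\<^sub>E (UNIV :: 'c set)) \<times> ({0..<m} \<rightarrow>\<^sub>E {0..M}))))"
  have fF: "finite F" unfolding F_def
    by (intro finite_UN_I finite_imageI finite_cartesian_product finite_PiE) auto
  have "{T. \<exists>g. wf_fg g \<and> Phi g = k \<and> T = cls g} \<subseteq> cls ` F"
  proof
    fix T assume "T \<in> {T. \<exists>g. wf_fg g \<and> Phi g = k \<and> T = cls g}"
    then obtain g where g: "wf_fg g" "Phi g = k" "T = cls g" by auto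
    have b: "nv g \<le> N" "\<And>v. v < nv g \<Longrightarrow> fr g v \<le> M"
      using Phi_bounds[OF fin g(2)] N_def M_def by auto
    have o: "restrict (out g) {0..<nv g} \<in> {0..<nv g} \<rightarrow>\<^sub>E insert None (Some ` {0..<nv g})"
    proof -
      have "out g v \<in> insert None (Some ` {0..<nv g})" if "v < nv g" for v
        using g(1) that unfolding wf_fg_def by (cases "out g v") auto
      then show ?thesis by auto
    qed
    have f: "restrict (fr g) {0..<nv g} \<in> {0..<nv g} \<rightarrow>\<^sub>E {0..M}" using b(2) by auto
    have d: "restrict (dec g) {0..<nv g} \<in> {0..<nv g} \<rightarrow>\<^sub>E (UNIV :: 'c set)" by auto
    have "normg g \<in> F" unfolding F_def normg_def using b(1) o f d
      by (intro UN_I[of "nv g"]) (auto intro!: image_eqI[where x = "(restrict (out g) {0..<nv g}, restrict (dec g) {0..<nv g}, restrict (fr g) {0..<nv g})"])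
    then show "T \<in> cls ` F" using g(3) cls_normg by (metis image_eqI)
  qed
  then show ?thesis using fF finite_subset by blast
qed



lemma sum_supp:
  assumes "finite A" "{x. f x \<noteq> 0} \<subseteq> A"
  shows "(\<Sum>x\<in>{x. f x \<noteq> 0}. f x * (g x :: 'a::comm_ring_1)) = (\<Sum>x\<in>A. f x * g x)"
  by (rule sum.mono_neutral_left) (use assms in \<open>auto intro: finite_subset\<close>)

lemma count_id':
  assumes wg: "wf_fg g" and wg': "wf_fg g'"
  shows "card {u. u < nv g \<and> fr g u > 0 \<and> iso_fg (remove_free g u) g'} * card (auts g')
       = card {v. v < nv g' \<and> iso_fg g (add_free g' v)} * card (auts g)"
proof (cases "nv g = nv g'")
  case True then show ?thesis using count_id[OF wg wg' refl, of ] by simp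
next
  case False
  have e1: "{u. u < nv g \<and> fr g u > 0 \<and> iso_fg (remove_free g u) g'} = {}"
    using False unfolding iso_fg_def by auto
  have e2: "{v. v < nv g' \<and> iso_fg g (add_free g' v)} = {}"
    using False unfolding iso_fg_def by auto
  show ?thesis by (simp only: e1 e2 card.empty mult_0)
qed

lemma dbar_supp: "{k'. (dbar_mono k k' :: 'k::comm_ring_1) \<noteq> 0} \<subseteq> (\<lambda>(a, j). shift k a j) ` {x. k x \<noteq> 0}"
proof
  fix k' assume "k' \<in> {k'. (dbar_mono k k' :: 'k) \<noteq> 0}"
  then have ne: "(\<Sum>p\<in>{(a, j). j \<ge> 0 \<and> k (a, j) > 0 \<and> k' = shift k a j}. of_nat (k p) :: 'k) \<noteq> 0"
    unfolding dbar_mono_def by simp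
  have "{(a, j). j \<ge> 0 \<and> k (a, j) > 0 \<and> k' = shift k a j} \<noteq> {}"
  proof
    assume "{(a, j). j \<ge> 0 \<and> k (a, j) > 0 \<and> k' = shift k a j} = {}"
    with ne show False by simp
  qed
  then obtain a j where "k (a, j) > 0" "k' = shift k a j" by auto
  then show "k' \<in> (\<lambda>(a, j). shift k a j) ` {x. k x \<noteq> 0}" by force
qed

context Bpred begin

definition jg :: "'c expo \<Rightarrow> 'c fg set \<Rightarrow> 'k::field" where
  "jg k T = (if Pc T \<and> Phi (rep T) = k then of_nat (mfact k) / of_nat (sigma T) else 0)"

lemma mono_eq:
  fixes k :: "'c expo"
  assumes fin: "finite {x. k x \<noteq> 0}" and finS: "finite {T. Pc T \<and> Phi (rep T) = k}"
  shows "lin_ext delta_cls (jg k :: _ \<Rightarrow> 'k::field_char_0) T' = lin_ext jg (dbar_mono k :: _ \<Rightarrow> 'k) T'"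
proof -
  define S where "S = {T. Pc T \<and> Phi (rep T) = k}"
  define SH where "SH = (\<lambda>(a, j). shift k a j) ` {x. k x \<noteq> 0}"
  have fSH: "finite SH" unfolding SH_def using fin by simp
  have L1: "lin_ext delta_cls (jg k :: _ \<Rightarrow> 'k) T' = (\<Sum>T\<in>S. jg k T * delta_cls T T')"
    unfolding lin_ext_def by (rule sum_supp) (use finS in \<open>auto simp: S_def jg_def\<close>)
  have R1: "lin_ext jg (dbar_mono k :: _ \<Rightarrow> 'k) T' = (\<Sum>k'\<in>SH. dbar_mono k k' * (jg k' T' :: 'k))"
    unfolding lin_ext_def by (rule sum_supp[OF fSH]) (use dbar_supp in \<open>simp add: SH_def\<close>)
  show ?thesis
  proof (cases "Pc T'")
    case False
    have "(\<Sum>k'\<in>SH. dbar_mono k k' * (jg k' T' :: 'k)) = 0" using False by (simp add: jg_def)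
    moreover have "(\<Sum>T\<in>S. jg k T * (delta_cls T T' :: 'k)) = 0"
    proof (rule sum.neutral, intro ballI)
      fix T assume T: "T \<in> S"
      have "{v. v < nv (rep T) \<and> fr (rep T) v > 0 \<and> cls (remove_free (rep T) v) = T'} = {}"
        using Pc_remove[of T] T False S_def by auto
      then show "jg k T * (delta_cls T T' :: 'k) = 0" unfolding delta_cls_def by simp
    qed
    ultimately show ?thesis using L1 R1 by simp
  next
    case True
    define g' where "g' = rep T'"
    define n where "n = nv g'"
    define K where "K = Phi g'"
    define s' where "s' = card (auts g')"
    have wg': "wf_fg g'" "cls g' = T'" using Pc_rep[OF True] g'_def by auto
    have s'pos: "s' > 0" using card_auts_pos[OF wg'(1)] s'_def by simp
    have sigT': "sigma T' = s'" unfolding sigma_def s'_def g'_def ..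
    have "(\<Sum>k'\<in>SH. dbar_mono k k' * (jg k' T' :: 'k)) =
          (\<Sum>k'\<in>SH. if k' = K then dbar_mono k K * (of_nat (mfact K) / of_nat s') else 0)"
      by (rule sum.cong[OF refl]) (simp add: jg_def True K_def g'_def sigT')
    also have "\<dots> = dbar_mono k K * (of_nat (mfact K) / of_nat s')"
    proof (cases "K \<in> SH")
      case False
      have sub: "{k'. (dbar_mono k k' :: 'k) \<noteq> 0} \<subseteq> SH" using dbar_supp SH_def by simp
      then have "(dbar_mono k K :: 'k) = 0" using False by blast
      then show ?thesis using False fSH by (simp add: sum.delta)
    qed (simp add: fSH sum.delta)
    finally have R2: "lin_ext jg (dbar_mono k :: _ \<Rightarrow> 'k) T' = dbar_mono k K * (of_nat (mfact K) / of_nat s')"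
      using R1 by simp
    define c where "c T = card {v. v < n \<and> cls (add_free g' v) = T}" for T
    have termT: "jg k T * (delta_cls T T' :: 'k) = of_nat (mfact k) / of_nat s' * of_nat (c T)" if T: "T \<in> S" for T
    proof -
      define g where "g = rep T"
      have PcT: "Pc T" "Phi g = k" using T S_def g_def by auto
      have wg: "wf_fg g" "cls g = T" using Pc_rep[OF PcT(1)] g_def by auto
      have sT: "sigma T = card (auts g)" unfolding sigma_def g_def ..
      have spos: "card (auts g) > 0" using card_auts_pos[OF wg(1)] .
      have e1: "{v. v < nv g \<and> fr g v > 0 \<and> cls (remove_free g v) = T'} =
                {u. u < nv g \<and> fr g u > 0 \<and> iso_fg (remove_free g u) g'}"
      proof (rule set_eqI)
        fix u show "u \<in> {v. v < nv g \<and> fr g v > 0 \<and> cls (remove_free g v) = T'} \<longleftrightarrow>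
                u \<in> {u. u < nv g \<and> fr g u > 0 \<and> iso_fg (remove_free g u) g'}"
          using cls_eq_iff[of "remove_free g u" g'] wg wg' by auto
      qed
      have e2: "{v. v < n \<and> cls (add_free g' v) = T} = {v. v < nv g' \<and> iso_fg g (add_free g' v)}"
      proof (rule set_eqI)
        fix v
        have wa: "wf_fg (add_free g' v)" using wg' by simp
        have "cls (add_free g' v) = T \<longleftrightarrow> iso_fg g (add_free g' v)"
          using cls_eq_iff[OF wa wg(1)] wg(2) iso_sym[OF wa] iso_sym[OF wg(1)] by blast
        then show "v \<in> {v. v < n \<and> cls (add_free g' v) = T} \<longleftrightarrow> v \<in> {v. v < nv g' \<and> iso_fg g (add_free g' v)}"
          using n_def by simp
      qed
      have cnt: "card {v. v < nv g \<and> fr g v > 0 \<and> cls (remove_free g v) = T'} * s' = c T * card (auts g)"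
        unfolding e1 c_def e2 s'_def by (rule count_id'[OF wg(1) wg'(1)])
      have dT: "delta_cls T T' = (of_nat (card {v. v < nv g \<and> fr g v > 0 \<and> cls (remove_free g v) = T'}) :: 'k)"
        unfolding delta_cls_def g_def ..
      have jT: "jg k T = (of_nat (mfact k) / of_nat (card (auts g)) :: 'k)"
        using PcT sT g_def by (simp add: jg_def)
      have cntk: "(of_nat (card {v. v < nv g \<and> fr g v > 0 \<and> cls (remove_free g v) = T'}) :: 'k) * of_nat s'
          = of_nat (c T) * of_nat (card (auts g))"
        using cnt by (metis of_nat_mult)
      show ?thesis unfolding dT jT using cntk spos s'pos
        by (simp add: field_simps)
    qed
    have "lin_ext delta_cls (jg k :: _ \<Rightarrow> 'k) T' = (\<Sum>T\<in>S. of_nat (mfact k) / of_nat s' * of_nat (c T))"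
      using L1 termT by simp
    also have "\<dots> = of_nat (mfact k) / of_nat s' * of_nat (\<Sum>T\<in>S. c T)"
      by (simp add: sum_distrib_left)
    also have "(\<Sum>T\<in>S. c T) = card {v. v < n \<and> Phi (add_free g' v) = k}"
    proof -
      have "(\<Sum>T\<in>S. c T) = card (\<Union>T\<in>S. {v. v < n \<and> cls (add_free g' v) = T})"
        unfolding c_def by (rule card_UN_disjoint[symmetric]) (use finS S_def in auto)
      also have "(\<Union>T\<in>S. {v. v < n \<and> cls (add_free g' v) = T}) = {v. v < n \<and> Phi (add_free g' v) = k}"
      proof (rule set_eqI)
        fix v
        show "v \<in> (\<Union>T\<in>S. {v. v < n \<and> cls (add_free g' v) = T}) \<longleftrightarrow> v \<in> {v. v < n \<and> Phi (add_free g' v) = k}"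
        proof (cases "v < n")
          case vn: True
          have wa: "wf_fg (add_free g' v)" using wg' by simp
          have ph: "Phi (rep (cls (add_free g' v))) = Phi (add_free g' v)"
            using Phi_iso[OF wa rep_cls_iso[OF wa]] by simp
          have pc: "Pc (cls (add_free g' v))" using Pc_add[OF True] vn n_def g'_def by simp
          show ?thesis using ph pc vn S_def by auto
        qed simp
      qed
      finally show ?thesis .
    qed
    finally have L2: "lin_ext delta_cls (jg k :: _ \<Rightarrow> 'k) T' = of_nat (mfact k) / of_nat s' * of_nat (card {v. v < n \<and> Phi (add_free g' v) = k})" .
    have ck: "of_nat (mfact k) * of_nat (card {v. v < n \<and> Phi (add_free g' v) = k}) = (dbar_mono k K :: 'k) * of_nat (mfact K)"
      using count_k[OF fin, of g'] n_def K_def by simp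
    show ?thesis unfolding L2 R2 using ck s'pos by (simp add: field_simps)
  qed
qed

end



lemma lin_ext_cong: "(\<And>x. L x \<noteq> 0 \<Longrightarrow> F x = F' x) \<Longrightarrow> lin_ext F L = lin_ext F' L"
  unfolding lin_ext_def by (intro ext sum.cong) auto

lemma lin_ext_comp:
  fixes L :: "'a \<Rightarrow> 'k::comm_ring_1"
  assumes fL: "fin_supp L" and fG: "\<And>x. L x \<noteq> 0 \<Longrightarrow> fin_supp (G x)"
  shows "lin_ext F (lin_ext G L) = lin_ext (\<lambda>x. lin_ext F (G x)) L"
proof (rule ext)
  fix y
  define A where "A = {x. L x \<noteq> 0}"
  define W where "W = (\<Union>x\<in>A. {z. G x z \<noteq> 0})"
  have fA: "finite A" using fL unfolding A_def fin_supp_def .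
  have fW: "finite W" unfolding W_def
  proof (rule finite_UN_I[OF fA])
    fix x assume "x \<in> A" then show "finite {z. G x z \<noteq> 0}" using fG unfolding A_def fin_supp_def by auto
  qed
  have "lin_ext F (lin_ext G L) y = (\<Sum>z\<in>{z. (\<Sum>x\<in>A. L x * G x z) \<noteq> 0}. (\<Sum>x\<in>A. L x * G x z) * F z y)"
    unfolding lin_ext_def A_def ..
  also have "\<dots> = (\<Sum>z\<in>W. (\<Sum>x\<in>A. L x * G x z) * F z y)"
  proof (rule sum_supp[OF fW])
    show "{z. (\<Sum>x\<in>A. L x * G x z) \<noteq> 0} \<subseteq> W"
    proof
      fix z assume "z \<in> {z. (\<Sum>x\<in>A. L x * G x z) \<noteq> 0}"
      then obtain x where "x \<in> A" "L x * G x z \<noteq> 0" by (meson mem_Collect_eq sum.neutral)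
      then show "z \<in> W" unfolding W_def by (metis (mono_tags) UN_I mem_Collect_eq mult_zero_right)
    qed
  qed
  also have "\<dots> = (\<Sum>z\<in>W. \<Sum>x\<in>A. L x * (G x z * F z y))"
    by (simp add: sum_distrib_right mult.assoc)
  also have "\<dots> = (\<Sum>x\<in>A. \<Sum>z\<in>W. L x * (G x z * F z y))"
    by (rule sum.swap)
  also have "\<dots> = (\<Sum>x\<in>A. L x * (\<Sum>z\<in>W. G x z * F z y))"
    by (simp add: sum_distrib_left)
  also have "\<dots> = (\<Sum>x\<in>A. L x * (\<Sum>z\<in>{z. G x z \<noteq> 0}. G x z * F z y))"
  proof (rule sum.cong[OF refl])
    fix x assume x: "x \<in> A"
    have "(\<Sum>z\<in>{z. G x z \<noteq> 0}. G x z * F z y) = (\<Sum>z\<in>W. G x z * F z y)"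
      by (rule sum_supp[OF fW]) (use x W_def in auto)
    then show "L x * (\<Sum>z\<in>W. G x z * F z y) = L x * (\<Sum>z\<in>{z. G x z \<noteq> 0}. G x z * F z y)" by simp
  qed
  also have "\<dots> = lin_ext (\<lambda>x. lin_ext F (G x)) L y"
    unfolding lin_ext_def A_def ..
  finally show "lin_ext F (lin_ext G L) y = lin_ext (\<lambda>x. lin_ext F (G x)) L y" .
qed

lemma aroma_Bpred: "Bpred is_aroma"
  by unfold_locales (auto simp: is_aroma_def wf_fg_def connected_fg_def adj_def)

lemma tree_Bpred: "Bpred is_tree"
  by unfold_locales (auto simp: is_tree_def wf_fg_def connected_fg_def adj_def)

interpretation aro: Bpred is_aroma by (rule aroma_Bpred)
interpretation tre: Bpred is_tree by (rule tree_Bpred)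

lemma jaro0_mono_eq: "jaro0_mono = aro.jg"
  unfolding jaro0_mono_def aro.jg_def aro.Pc_def is_aroma_class_def by (intro ext) simp

lemma jaro1_mono_eq: "jaro1_mono = tre.jg"
  unfolding jaro1_mono_def tre.jg_def tre.Pc_def is_tree_class_def by (intro ext) simp

lemma dbar_fin: "finite {x. k x \<noteq> 0} \<Longrightarrow> fin_supp (dbar_mono k :: _ \<Rightarrow> 'k::comm_ring_1)"
  unfolding fin_supp_def by (rule finite_subset[OF dbar_supp]) simp

lemma finS_gen:
  fixes k :: "('c::finite) expo" and B :: "'c fg \<Rightarrow> bool"
  assumes BP: "Bpred B" and fk: "finite {x. k x \<noteq> 0}"
  shows "finite {T. Bpred.Pc B T \<and> Phi (rep T) = k}"
proof (rule finite_subset[OF _ finite_cls_Phi[OF fk]])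
  show "{T. Bpred.Pc B T \<and> Phi (rep T) = k} \<subseteq> {T. \<exists>g. wf_fg g \<and> Phi g = k \<and> T = cls g}"
    using Bpred.Pc_rep[OF BP] by blast
qed

lemma jg_fin_gen:
  fixes k :: "('c::finite) expo" and B :: "'c fg \<Rightarrow> bool"
  assumes BP: "Bpred B" and fk: "finite {x. k x \<noteq> 0}"
  shows "fin_supp (Bpred.jg B k :: _ \<Rightarrow> 'k::field)"
  unfolding fin_supp_def
  by (rule finite_subset[OF _ finS_gen[OF BP fk]]) (auto simp: Bpred.jg_def[OF BP] split: if_splits)

lemma main_gen:
  fixes L :: "('c::finite) expo \<Rightarrow> 'k::field_char_0" and B :: "'c fg \<Rightarrow> bool"
  assumes BP: "Bpred B" and M: "in_M m L"
  shows "lin_ext delta_cls (lin_ext (Bpred.jg B) L) = lin_ext (Bpred.jg B) (lin_ext dbar_mono L)"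
proof -
  have fL: "fin_supp L" using M unfolding in_M_def fin_supp_def by simp
  have fk: "finite {x. k x \<noteq> 0}" if "L k \<noteq> 0" for k
    using M that unfolding in_M_def is_monom_def by auto
  have "lin_ext delta_cls (lin_ext (Bpred.jg B) L) = lin_ext (\<lambda>k. lin_ext delta_cls (Bpred.jg B k)) L"
    by (rule lin_ext_comp[OF fL jg_fin_gen[OF BP fk]])
  also have "\<dots> = lin_ext (\<lambda>k. lin_ext (Bpred.jg B) (dbar_mono k)) L"
    by (rule lin_ext_cong) (rule ext, rule Bpred.mono_eq[OF BP fk finS_gen[OF BP fk]])
  also have "\<dots> = lin_ext (Bpred.jg B) (lin_ext dbar_mono L)"
    by (rule lin_ext_comp[symmetric, OF fL dbar_fin[OF fk]])
  finally show ?thesis .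
qed

theorem corollary4p9:
  fixes L0 L1 :: "('c::finite) expo \<Rightarrow> 'k::field_char_0"
  assumes "in_M 0 L0" and "in_M (-1) L1"
  shows "delta (jaro0 L0) = jaro0 (dbar L0) \<and> delta (jaro1 L1) = jaro1 (dbar L1)"
  unfolding delta_def jaro0_def jaro1_def dbar_def jaro0_mono_eq jaro1_mono_eq
  using main_gen[OF aroma_Bpred assms(1)] main_gen[OF tree_Bpred assms(2)] by simp

end
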